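(* Let $\alpha\in\Lambda$ be an infinite multiindex. For any $\beta,\gamma\in\Lambda$ the limit \[ q(\gamma,\beta)=\lim_{m\to\infty} q\big((\gamma_1,\dots,\gamma_m),(\beta_1,\dots,\beta_m)\big) \] exists. Moreover, on the complex vector space $\tilde H_\alpha$ having as a basis the formal symbols $e_\beta$, $\beta\sim\alpha$, the sesquilinear form determined by \[ (e_\beta,e_\gamma)=q(\gamma,\beta),\qquad \beta,\gamma\sim\alpha, \] is Hermitian and positive, i.e. $\sum_{k,l} c_k\overline{c_l}\,(e_{\beta^{(k)}},e_{\beta^{(l)}})\ge 0$ for all finite families of scalars $c_k$ and multiindices $\beta^{(k)}\sim\alpha$. In addition, $(e_\beta,e_\gamma)=0$ unless there exists $m$ with $\sigma^m(\beta)=\sigma^m(\gamma)$, in which case $(e_\beta,e_\gamma)=(e_{(\beta_1,\dots,\beta_m)},e_{(\gamma_1,\dots,\gamma_m)})_{\mathcal F}$.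
   Context: Fix $d\ge 2$ and complex numbers $q_{ij}$, $1\le i\ne j\le d$, with $|q_{ij}|<1$ and $q_{ij}=\overline{q_{ji}}$. Let $W$ be the universal $C^*$-algebra generated by $s_1,\dots,s_d$ subject to $s_i^*s_i=I$ and $s_i^*s_j=q_{ij}s_js_i^*$ for $i\ne j$. Let $\Lambda_m=\{1,\dots,d\}^m$ (with $\Lambda_0$ consisting of the empty multiindex $\emptyset$), $\Lambda^0=\bigcup_{m\ge0}\Lambda_m$, and $\Lambda=\{1,\dots,d\}^{\mathbb N}$ the set of infinite multiindices. For finite $\alpha=(\alpha_1,\dots,\alpha_m)$ put $s_\alpha=s_{\alpha_1}\cdots s_{\alpha_m}$, $s_\emptyset=I$. The shift is $\sigma(\alpha_1,\alpha_2,\dots)=(\alpha_2,\alpha_3,\dots)$. Two infinite multiindices are equivalent, $\beta\sim\alpha$, if there are $m,n\ge0$ with $\sigma^m(\beta)=\sigma^n(\alpha)$. Fock representation: $\pi_F$ is the $*$-representation of $W$ on a Hilbert space $\mathcal F$ with a unit vector $\Omega$ such that $\pi_F(s_j)^*\Omega=0$ for all $j$ and the vectors $e_\alpha=\pi_F(s_\alpha)\Omega$, $\alpha\in\Lambda^0$, span a dense subspace; $\mathcal F_n=\mathrm{span}\{e_\alpha:\alpha\in\Lambda_n\}$, and these subspaces are mutually orthogonal. For finite $\alpha,\beta\in\Lambda_m$ define $q(\alpha,\beta)=\langle \pi_F(s_\alpha)^*\pi_F(s_\beta)\Omega,\Omega\rangle=(e_\beta,e_\alpha)_{\mathcal F}$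 (this is nonzero only if $\beta$ is a permutation of $\alpha$). *)

theory Defs
  imports "HOL-Analysis.Analysis" "HOL-Library.Complex_Order"
begin

text \<open>Letters are 1..d; finite multiindices are lists, infinite ones are
functions nat => nat (0-based: beta_1 is beta 0).  The parameter q i j
is q_{ij}.\<close>

text \<open>Action of the adjoint generator s_i^* on the Fock vector e_beta,
computed from s_i^* s_i = I, s_i^* s_j = q_ij s_j s_i^* (i ~= j) and
s_i^* Omega = 0:  None means the zero vector, Some (c, r) means c * e_r.\<close>
fun sadj :: "(nat \<Rightarrow> nat \<Rightarrow> complex) \<Rightarrow> nat \<Rightarrow> nat list \<Rightarrow> (complex \<times> nat list) option" where
  "sadj q i [] = None"
| "sadj q i (b # bs) =
     (if b = i then Some (1, bs)
      else map_option (\<lambda>(c, r). (q i b * c, b # r)) (sadj q i bs))"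

text \<open>Finite q(alpha, beta) = < pi_F(s_alpha)^* pi_F(s_beta) Omega, Omega >
 = (e_beta, e_alpha)_F, where s_alpha^* = s_{alpha_m}^* ... s_{alpha_1}^*.\<close>
fun qfin :: "(nat \<Rightarrow> nat \<Rightarrow> complex) \<Rightarrow> nat list \<Rightarrow> nat list \<Rightarrow> complex" where
  "qfin q [] [] = 1"
| "qfin q [] (b # bs) = 0"
| "qfin q (a # as) bs =
     (case sadj q a bs of None \<Rightarrow> 0 | Some (c, r) \<Rightarrow> c * qfin q as r)"

definition infidx :: "nat \<Rightarrow> (nat \<Rightarrow> nat) set" where
  "infidx d = {\<alpha>. \<forall>n. \<alpha> n \<in> {1..d}}"

definition prefix :: "(nat \<Rightarrow> nat) \<Rightarrow> nat \<Rightarrow> nat list" where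
  "prefix \<alpha> m = map \<alpha> [0..<m]"

definition shift :: "nat \<Rightarrow> (nat \<Rightarrow> nat) \<Rightarrow> (nat \<Rightarrow> nat)" where
  "shift m \<alpha> = (\<lambda>n. \<alpha> (n + m))"

definition midx_equiv :: "(nat \<Rightarrow> nat) \<Rightarrow> (nat \<Rightarrow> nat) \<Rightarrow> bool" where
  "midx_equiv \<beta> \<alpha> \<longleftrightarrow> (\<exists>m n. shift m \<beta> = shift n \<alpha>)"

definition qinf :: "(nat \<Rightarrow> nat \<Rightarrow> complex) \<Rightarrow> (nat \<Rightarrow> nat) \<Rightarrow> (nat \<Rightarrow> nat) \<Rightarrow> complex" where
  "qinf q \<gamma> \<beta> = lim (\<lambda>m. qfin q (prefix \<gamma> m) (prefix \<beta> m))"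

definition eform :: "(nat \<Rightarrow> nat \<Rightarrow> complex) \<Rightarrow> (nat \<Rightarrow> nat) \<Rightarrow> (nat \<Rightarrow> nat) \<Rightarrow> complex" where
  "eform q \<beta> \<gamma> = qinf q \<gamma> \<beta>"

end

theory Submission
  imports Defs
begin


definition occ :: "nat list \<Rightarrow> (nat \<times> nat) set" where
  "occ w = {(a,k). k < count (mset w) a}"

fun pos :: "nat list \<Rightarrow> nat \<times> nat \<Rightarrow> nat" where
  "pos [] x = 0"
| "pos (c # w) (a, k) = (if c = a then (if k = 0 then 0 else Suc (pos w (a, k - 1))) else Suc (pos w (a, k)))"

definition invs :: "nat list \<Rightarrow> nat list \<Rightarrow> ((nat \<times> nat) \<times> (nat \<times> nat)) set" where
  "invs al be = {(x,y). x \<in> occ al \<and> y \<in> occ al \<and> fst x \<noteq> fst y \<and> pos al x < pos al y \<and> pos be y < pos be x}"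

definition socc :: "nat \<Rightarrow> nat \<times> nat \<Rightarrow> nat \<times> nat" where
  "socc a y = (if fst y = a then (a, Suc (snd y)) else y)"

lemma sadj_None: "i \<notin> set bs \<Longrightarrow> sadj q i bs = None"
  by (induction bs) auto

lemma sadj_split: "i \<notin> set pre \<Longrightarrow> sadj q i (pre @ i # post) = Some (prod_list (map (q i) pre), pre @ post)"
  by (induction pre) auto

lemma occ_Nil[simp]: "occ [] = {}" by (simp add: occ_def)

lemma occ_Cons: "occ (c # w) = insert (c, count (mset w) c) (occ w)"
  by (auto simp: occ_def split: if_splits)

lemma occ_new: "(c, count (mset w) c) \<notin> occ w"
  by (simp add: occ_def)

lemma finite_occ[simp]: "finite (occ w)"
  by (induction w) (auto simp: occ_Cons)

lemma card_occ: "card (occ w) = length w"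
  by (induction w) (simp_all add: occ_Cons occ_new)

lemma prod_occ: "(\<Prod>y\<in>occ w. f (fst y)) = prod_list (map f w)" for f :: "nat \<Rightarrow> complex"
  by (induction w) (simp_all add: occ_Cons occ_new)

lemma occ_mset: "mset u = mset v \<Longrightarrow> occ u = occ v"
  by (simp add: occ_def)

lemma occ_eq_mset: "occ u = occ v \<Longrightarrow> mset u = mset v"
proof -
  assume h: "occ u = occ v"
  have "count (mset u) a = count (mset v) a" for a
  proof (rule ccontr)
    assume "count (mset u) a \<noteq> count (mset v) a"
    then consider "count (mset u) a < count (mset v) a" | "count (mset v) a < count (mset u) a" by linarith
    then show False
    proof cases
      case 1 then have "(a, count (mset u) a) \<in> occ v" "(a, count (mset u) a) \<notin> occ u" by (auto simp: occ_def)
      with h show False by simp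
    next
      case 2 then have "(a, count (mset v) a) \<in> occ u" "(a, count (mset v) a) \<notin> occ v" by (auto simp: occ_def)
      with h show False by simp
    qed
  qed
  then show ?thesis by (simp add: multiset_eq_iff)
qed

lemma pos_lt: "x \<in> occ w \<Longrightarrow> pos w x < length w"
proof (induction w arbitrary: x)
  case Nil then show ?case by simp
next
  case (Cons c w)
  obtain a k where x: "x = (a,k)" by fastforce
  show ?case
  proof (cases "c = a")
    case True
    show ?thesis
    proof (cases k)
      case 0 then show ?thesis using x True by simp
    next
      case (Suc k')
      have "(a,k') \<in> occ w" using Cons.prems x True Suc by (auto simp: occ_def)
      then show ?thesis using Cons.IH x True Suc by simp
    qed
  next
    case False
    have "(a,k) \<in> occ w" using Cons.prems x False by (auto simp: occ_def)
    then show ?thesis using Cons.IH x False by simp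
  qed
qed

lemma pos_inj: "x \<in> occ w \<Longrightarrow> y \<in> occ w \<Longrightarrow> pos w x = pos w y \<Longrightarrow> x = y"
proof (induction w arbitrary: x y)
  case Nil then show ?case by simp
next
  case (Cons c w)
  obtain a k where x: "x = (a,k)" by fastforce
  obtain b l where y: "y = (b,l)" by fastforce
  have occx: "(if c = a then k = 0 \<or> (k - 1 < count (mset w) a) else k < count (mset w) a)"
    using Cons.prems(1) x by (auto simp: occ_def split: if_splits)
  have occy: "(if c = b then l = 0 \<or> (l - 1 < count (mset w) b) else l < count (mset w) b)"
    using Cons.prems(2) y by (auto simp: occ_def split: if_splits)
  show ?case
  proof (cases "c = a")
    case ca: True
    show ?thesis
    proof (cases "c = b")
      case cb: True
      show ?thesis
      proof (cases "k = 0 \<or> l = 0")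
        case True then show ?thesis using Cons.prems(3) x y ca cb by (auto split: if_splits)
      next
        case False
        then have "(a, k-1) \<in> occ w" "(b, l-1) \<in> occ w" using occx occy ca cb by (auto simp: occ_def)
        moreover have "pos w (a,k-1) = pos w (b, l-1)" using Cons.prems(3) x y ca cb False by auto
        ultimately have "(a,k-1) = (b,l-1)" using Cons.IH by blast
        then show ?thesis using x y False by auto
      qed
    next
      case cb: False
      show ?thesis
      proof (cases "k = 0")
        case True then show ?thesis using Cons.prems(3) x y ca cb by auto
      next
        case False
        then have "(a, k-1) \<in> occ w" "(b, l) \<in> occ w" using occx occy ca cb by (auto simp: occ_def)
        moreover have "pos w (a,k-1) = pos w (b, l)" using Cons.prems(3) x y ca cb False by auto
        ultimately have "(a,k-1) = (b,l)" using Cons.IH by blast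
        then show ?thesis using ca cb by auto
      qed
    qed
  next
    case ca: False
    show ?thesis
    proof (cases "c = b")
      case cb: True
      show ?thesis
      proof (cases "l = 0")
        case True then show ?thesis using Cons.prems(3) x y ca cb by auto
      next
        case False
        then have "(a, k) \<in> occ w" "(b, l-1) \<in> occ w" using occx occy ca cb by (auto simp: occ_def)
        moreover have "pos w (a,k) = pos w (b, l-1)" using Cons.prems(3) x y ca cb False by auto
        ultimately have "(a,k) = (b,l-1)" using Cons.IH by blast
        then show ?thesis using ca cb by auto
      qed
    next
      case cb: False
      have "(a, k) \<in> occ w" "(b, l) \<in> occ w" using occx occy ca cb by (auto simp: occ_def)
      moreover have "pos w (a,k) = pos w (b, l)" using Cons.prems(3) x y ca cb by auto
      ultimately show ?thesis using Cons.IH x y by blast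
    qed
  qed
qed

lemma pos_append: "x \<in> occ u \<Longrightarrow> pos (u @ v) x = pos u x"
proof (induction u arbitrary: x)
  case Nil then show ?case by simp
next
  case (Cons c u)
  obtain a k where x: "x = (a,k)" by fastforce
  show ?case
  proof (cases "c = a")
    case True
    show ?thesis
    proof (cases k)
      case 0 then show ?thesis using x True by simp
    next
      case (Suc k')
      have "(a,k') \<in> occ u" using Cons.prems x True Suc by (auto simp: occ_def)
      then show ?thesis using Cons.IH x True Suc by simp
    qed
  next
    case False
    have "(a,k) \<in> occ u" using Cons.prems x False by (auto simp: occ_def)
    then show ?thesis using Cons.IH x False by simp
  qed
qed

lemma pos_append_ge: "x \<notin> occ u \<Longrightarrow> length u \<le> pos (u @ v) x"
proof (induction u arbitrary: x)
  case Nil then show ?case by simp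
next
  case (Cons c u)
  obtain a k where x: "x = (a,k)" by fastforce
  show ?case
  proof (cases "c = a")
    case True
    show ?thesis
    proof (cases k)
      case 0 then show ?thesis using x True Cons.prems by (simp add: occ_def)
    next
      case (Suc k')
      have "(a,k') \<notin> occ u" using Cons.prems x True Suc by (auto simp: occ_def)
      then show ?thesis using Cons.IH x True Suc by simp
    qed
  next
    case False
    have "(a,k) \<notin> occ u" using Cons.prems x False by (auto simp: occ_def)
    then show ?thesis using Cons.IH x False by simp
  qed
qed

lemma occ_append_mono: "occ u \<subseteq> occ (u @ v)"
  by (auto simp: occ_def)

lemma count_split: "count (mset (pre @ a # post)) b = count (mset (pre @ post)) b + (if b = a then 1 else 0)"
  by simp

lemma occ_split: "occ (pre @ a # post) = insert (a,0) (socc a ` occ (pre @ post))"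
proof (intro equalityI subsetI)
  fix x assume x: "x \<in> occ (pre @ a # post)"
  obtain b k where xe: "x = (b,k)" by fastforce
  show "x \<in> insert (a,0) (socc a ` occ (pre @ post))"
  proof (cases "b = a")
    case True
    show ?thesis
    proof (cases k)
      case 0 then show ?thesis using xe True by simp
    next
      case (Suc k')
      have "(a,k') \<in> occ (pre @ post)" using x xe True Suc by (simp add: occ_def)
      moreover have "socc a (a,k') = x" using xe True Suc by (simp add: socc_def)
      ultimately show ?thesis by blast
    qed
  next
    case False
    have "(b,k) \<in> occ (pre @ post)" using x xe False by (simp add: occ_def)
    moreover have "socc a (b,k) = x" using xe False by (simp add: socc_def)
    ultimately show ?thesis by blast
  qed
next
  fix x assume "x \<in> insert (a,0) (socc a ` occ (pre @ post))"
  then show "x \<in> occ (pre @ a # post)"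
    by (auto simp: occ_def socc_def)
qed

lemma socc_fst[simp]: "fst (socc a y) = fst y"
  by (simp add: socc_def)

lemma socc_inj: "socc a x = socc a y \<Longrightarrow> x = y"
  by (auto simp: socc_def split: if_splits prod.splits) (metis prod.collapse)+

lemma socc_ne: "socc a y \<noteq> (a,0)"
  by (auto simp: socc_def)

lemma pos_split1: "a \<notin> set pre \<Longrightarrow> pos (pre @ a # post) (a,0) = length pre"
  by (induction pre) auto

lemma pos_split2: "a \<notin> set pre \<Longrightarrow> y \<in> occ (pre @ post) \<Longrightarrow>
   pos (pre @ a # post) (socc a y) = (if pos (pre @ post) y < length pre then pos (pre @ post) y else Suc (pos (pre @ post) y))"
proof (induction pre arbitrary: y)
  case Nil
  obtain b k where y: "y = (b,k)" by fastforce
  then show ?case by (simp add: socc_def)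
next
  case (Cons c pre)
  obtain b k where y: "y = (b,k)" by fastforce
  have ca: "c \<noteq> a" "a \<notin> set pre" using Cons.prems by auto
  show ?case
  proof (cases "b = c")
    case bc: True
    then have sy: "socc a y = y" using y ca by (simp add: socc_def)
    show ?thesis
    proof (cases k)
      case 0 then show ?thesis using y bc sy by simp
    next
      case (Suc k')
      have occ': "(c,k') \<in> occ (pre @ post)" using Cons.prems(2) y bc Suc by (simp add: occ_def)
      have "socc a (c,k') = (c,k')" using ca by (simp add: socc_def)
      then have "pos (pre @ a # post) (c,k') = (if pos (pre @ post) (c,k') < length pre then pos (pre @ post) (c,k') else Suc (pos (pre @ post) (c,k')))"
        using Cons.IH[OF ca(2) occ'] by simp
      then show ?thesis using y bc sy Suc by simp
    qed
  next
    case bc: False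
    have occ': "(b,k) \<in> occ (pre @ post)" using Cons.prems(2) y bc by (simp add: occ_def)
    have e: "pos (pre @ a # post) (socc a (b,k)) = (if pos (pre @ post) (b,k) < length pre then pos (pre @ post) (b,k) else Suc (pos (pre @ post) (b,k)))"
      using Cons.IH[OF ca(2) occ'] by simp
    have "socc a (b,k) = (b, if b = a then Suc k else k)" by (simp add: socc_def)
    then show ?thesis using e y bc by (auto simp: socc_def split: if_splits)
  qed
qed

lemma pos_before: "y \<in> occ (u @ v) \<Longrightarrow> pos (u @ v) y < length u \<Longrightarrow> y \<in> occ u"
  using pos_append_ge[of y u v] by linarith

lemma occ_fst: "y \<in> occ w \<Longrightarrow> fst y \<in> set w"
proof -
  assume y: "y \<in> occ w"
  obtain b k where ye: "y = (b,k)" by fastforce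
  have "k < count (mset w) b" using y ye by (simp add: occ_def)
  then have "count (mset w) b \<noteq> 0" by linarith
  then show ?thesis using ye by simp
qed

lemma socc_id: "fst y \<noteq> a \<Longrightarrow> socc a y = y"
  by (simp add: socc_def)

definition psi :: "nat \<Rightarrow> nat \<Rightarrow> nat" where "psi n i = (if i < n then i else Suc i)"

lemma psi_less: "psi n i < psi n j \<longleftrightarrow> i < j"
  by (auto simp: psi_def)

abbreviation F :: "(nat \<Rightarrow> nat \<Rightarrow> complex) \<Rightarrow> (nat \<times> nat) \<times> (nat \<times> nat) \<Rightarrow> complex" where
  "F q p \<equiv> q (fst (fst p)) (fst (snd p))"

lemma invs_step:
  assumes a: "a \<notin> set pre" and m: "mset as = mset (pre @ post)"
  shows "invs (a # as) (pre @ a # post) =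
     (\<lambda>y. ((a,0),y)) ` occ pre \<union> map_prod (socc a) (socc a) ` invs as (pre @ post)"
proof -
  define Oc where "Oc = occ as"
  have Oeq: "occ (pre @ post) = Oc" using m Oc_def occ_mset by metis
  have oa: "occ (a # as) = insert (a,0) (socc a ` Oc)"
    using occ_split[of "[]" a as] Oc_def by simp
  have ob: "occ (pre @ a # post) = insert (a,0) (socc a ` Oc)"
    using occ_split[of pre a post] Oeq by simp
  have pa0: "pos (a # as) (a,0) = 0" by simp
  have pas: "pos (a # as) (socc a y) = Suc (pos as y)" if "y \<in> Oc" for y
    using pos_split2[of a "[]" y as] that Oc_def by simp
  have pb0: "pos (pre @ a # post) (a,0) = length pre" using pos_split1[OF a] .
  have pbs: "pos (pre @ a # post) (socc a y) = psi (length pre) (pos (pre @ post) y)" if "y \<in> Oc" for y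
    using pos_split2[OF a, of y post] that Oeq by (simp add: psi_def)
  have opre: "occ pre \<subseteq> Oc" using occ_append_mono[of pre post] Oeq by simp
  show ?thesis
  proof (intro equalityI subsetI)
    fix p assume p: "p \<in> invs (a # as) (pre @ a # post)"
    obtain x y where pe: "p = (x,y)" by (cases p) auto
    have xo: "x \<in> insert (a,0) (socc a ` Oc)" and yo: "y \<in> insert (a,0) (socc a ` Oc)"
      and fxy: "fst x \<noteq> fst y" and lt1: "pos (a # as) x < pos (a # as) y"
      and lt2: "pos (pre @ a # post) y < pos (pre @ a # post) x"
      using p pe oa by (auto simp: invs_def)
    from yo obtain y' where y': "y' \<in> Oc" "y = socc a y'"
      using lt1 pa0 by auto
    show "p \<in> (\<lambda>y. ((a,0),y)) ` occ pre \<union> map_prod (socc a) (socc a) ` invs as (pre @ post)"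
    proof (cases "x = (a,0)")
      case True
      have "fst y' \<noteq> a" using fxy True y' by simp
      then have yy: "socc a y' = y'" by (rule socc_id)
      have "psi (length pre) (pos (pre @ post) y') < length pre"
        using lt2 True pb0 pbs[OF y'(1)] y' by simp
      then have "pos (pre @ post) y' < length pre" by (auto simp: psi_def split: if_splits)
      then have "y' \<in> occ pre" using pos_before y'(1) Oeq by blast
      then show ?thesis using pe True y' yy by blast
    next
      case False
      then obtain x' where x': "x' \<in> Oc" "x = socc a x'" using xo by auto
      have "(x',y') \<in> invs as (pre @ post)"
        using x' y' fxy lt1 lt2 pas pbs psi_less Oc_def Oeq by (auto simp: invs_def)
      then show ?thesis using pe x' y' by force
    qed
  next
    fix p assume "p \<in> (\<lambda>y. ((a,0),y)) ` occ pre \<union> map_prod (socc a) (socc a) ` invs as (pre @ post)"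
    then consider (A) y where "y \<in> occ pre" "p = ((a,0),y)"
      | (B) x y where "(x,y) \<in> invs as (pre @ post)" "p = (socc a x, socc a y)" by auto
    then show "p \<in> invs (a # as) (pre @ a # post)"
    proof cases
      case A
      have fy: "fst y \<noteq> a" using occ_fst[OF A(1)] a by auto
      have yy: "socc a y = y" using socc_id[OF fy] .
      have yO: "y \<in> Oc" using A(1) opre by auto
      have "pos (pre @ a # post) y = pos pre y" using pos_append[OF A(1)] by simp
      also have "\<dots> < length pre" using pos_lt[OF A(1)] .
      finally have l2: "pos (pre @ a # post) y < pos (pre @ a # post) (a,0)" using pb0 by simp
      have l1: "pos (a # as) (a,0) < pos (a # as) y" using pas[OF yO] yy by simp
      have "y \<in> occ (a # as)" using oa yO yy by (metis image_eqI insertI2)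
      moreover have "(a,0) \<in> occ (a # as)" using oa by simp
      ultimately show ?thesis using A(2) l1 l2 fy by (auto simp: invs_def)
    next
      case B
      have xO: "x \<in> Oc" and yO: "y \<in> Oc" and fxy: "fst x \<noteq> fst y"
        and l1: "pos as x < pos as y" and l2: "pos (pre @ post) y < pos (pre @ post) x"
        using B(1) Oc_def by (auto simp: invs_def)
      show ?thesis using B(2) xO yO fxy l1 l2 pas pbs psi_less oa by (auto simp: invs_def)
    qed
  qed
qed

lemma qfin_formula:
  "qfin q al be = (if mset al = mset be then (\<Prod>p\<in>invs al be. F q p) else 0)"
proof (induction al arbitrary: be)
  case Nil
  then show ?case by (cases be) (auto simp: invs_def)
next
  case (Cons a as)
  show ?case
  proof (cases "a \<in> set be")
    case False
    then have "sadj q a be = None" by (rule sadj_None)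
    moreover have "mset (a # as) \<noteq> mset be" using False
      by (metis list.set_intros(1) set_mset_mset)
    ultimately show ?thesis by simp
  next
    case True
    then obtain pre post where be: "be = pre @ a # post" and a: "a \<notin> set pre"
      using split_list_first by metis
    have q1: "qfin q (a # as) be = prod_list (map (q a) pre) * qfin q as (pre @ post)"
      using be sadj_split[OF a] by simp
    have meq: "mset (a # as) = mset be \<longleftrightarrow> mset as = mset (pre @ post)"
      using be by auto
    show ?thesis
    proof (cases "mset as = mset (pre @ post)")
      case False then show ?thesis using q1 meq Cons.IH by simp
    next
      case m: True
      have inj: "inj_on (map_prod (socc a) (socc a)) X" for X
        by (auto simp: inj_on_def dest: socc_inj)
      have disj: "(\<lambda>y. ((a,0),y)) ` occ pre \<inter> map_prod (socc a) (socc a) ` invs as (pre @ post) = {}"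
        using socc_ne[of a] by fastforce
      have fin: "finite (invs as (pre @ post))"
        by (rule finite_subset[of _ "occ as \<times> occ as"]) (auto simp: invs_def)
      have "(\<Prod>p\<in>invs (a # as) be. F q p) =
            (\<Prod>p\<in>(\<lambda>y. ((a,0),y)) ` occ pre. F q p) * (\<Prod>p\<in>map_prod (socc a) (socc a) ` invs as (pre @ post). F q p)"
        unfolding be invs_step[OF a m] by (rule prod.union_disjoint) (use disj fin in auto)
      also have "(\<Prod>p\<in>(\<lambda>y. ((a,0),y)) ` occ pre. F q p) = (\<Prod>y\<in>occ pre. q a (fst y))"
        by (subst prod.reindex) (auto simp: inj_on_def)
      also have "\<dots> = prod_list (map (q a) pre)" by (rule prod_occ)
      also have "(\<Prod>p\<in>map_prod (socc a) (socc a) ` invs as (pre @ post). F q p) = (\<Prod>p\<in>invs as (pre @ post). F q p)"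
        by (subst prod.reindex[OF inj]) (simp add: case_prod_beta)
      finally show ?thesis using q1 meq m Cons.IH by simp
    qed
  qed
qed



lemma invs_swap: "mset u = mset v \<Longrightarrow> invs v u = prod.swap ` invs u v"
proof -
  assume "mset u = mset v"
  then have o: "occ v = occ u" using occ_mset by metis
  show ?thesis
  proof (intro equalityI subsetI)
    fix p assume "p \<in> invs v u"
    moreover obtain x y where pe: "p = (x,y)" by (cases p) auto
    ultimately have "(y,x) \<in> invs u v" using o unfolding invs_def by auto
    then show "p \<in> prod.swap ` invs u v" using pe by (metis image_eqI swap_simp)
  next
    fix p assume "p \<in> prod.swap ` invs u v"
    then obtain x y where pe: "p = (y,x)" "(x,y) \<in> invs u v" by auto
    then show "p \<in> invs v u" using o unfolding invs_def by auto
  qed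
qed

lemma qfin_herm:
  assumes h: "\<And>i j. i \<in> set u \<Longrightarrow> j \<in> set u \<Longrightarrow> i \<noteq> j \<Longrightarrow> q i j = cnj (q j i)"
  shows "qfin q u v = cnj (qfin q v u)"
proof (cases "mset u = mset v")
  case False
  have "mset v \<noteq> mset u" using False by metis
  then show ?thesis using False by (simp add: qfin_formula)
next
  case True
  have "cnj (qfin q v u) = (\<Prod>p\<in>invs v u. cnj (F q p))"
    using True by (simp add: qfin_formula)
  also have "\<dots> = (\<Prod>p\<in>invs u v. cnj (F q (prod.swap p)))"
    unfolding invs_swap[OF True] by (subst prod.reindex) (auto simp: inj_on_def)
  also have "\<dots> = (\<Prod>p\<in>invs u v. F q p)"
  proof (rule prod.cong)
    fix p assume p: "p \<in> invs u v"
    have "fst (fst p) \<in> set u" "fst (snd p) \<in> set u" "fst (fst p) \<noteq> fst (snd p)"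
      using p occ_fst by (auto simp: invs_def)
    then have "q (fst (fst p)) (fst (snd p)) = cnj (q (fst (snd p)) (fst (fst p)))" using h by blast
    then show "cnj (F q (prod.swap p)) = F q p" by (simp add: fst_swap snd_swap)
  qed simp
  finally show ?thesis using True by (simp add: qfin_formula)
qed

lemma qfin_refl: "qfin q w w = 1"
  by (induction w) simp_all

lemma qfin_append_eq: "mset u = mset v \<Longrightarrow> qfin q (u @ w) (v @ w) = qfin q u v"
proof (induction u arbitrary: v)
  case Nil then show ?case by (simp add: qfin_refl)
next
  case (Cons a u)
  then have "a \<in> set v" by (metis list.set_intros(1) set_mset_mset)
  then obtain pre post where v: "v = pre @ a # post" and a: "a \<notin> set pre"
    using split_list_first by metis
  have m: "mset u = mset (pre @ post)" using Cons.prems v by simp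
  have "qfin q ((a # u) @ w) (v @ w) = prod_list (map (q a) pre) * qfin q (u @ w) (pre @ post @ w)"
    using sadj_split[OF a, of q "post @ w"] v by simp
  also have "\<dots> = prod_list (map (q a) pre) * qfin q u (pre @ post)"
    using Cons.IH[OF m] by simp
  also have "\<dots> = qfin q (a # u) v" using sadj_split[OF a, of q post] v by simp
  finally show ?case .
qed

lemma qfin_append: "qfin q (u @ w) (v @ w) = qfin q u v"
proof (cases "mset u = mset v")
  case True then show ?thesis by (rule qfin_append_eq)
next
  case False
  then have "mset (u @ w) \<noteq> mset (v @ w)" by simp
  with False show ?thesis by (simp add: qfin_formula)
qed

lemma mult_cnj_nonneg: "0 \<le> (z::complex) * cnj z"
  unfolding complex_mult_cnj by (simp add: less_eq_complex_def)

definition st :: "nat list \<Rightarrow> (nat \<times> nat) \<times> (nat \<times> nat) \<Rightarrow> bool" where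
  "st w p = (fst p \<in> occ w \<and> snd p \<in> occ w \<and> pos w (snd p) < pos w (fst p))"

definition uu :: "(nat \<Rightarrow> nat \<Rightarrow> complex) \<Rightarrow> (nat \<times> nat) \<times> (nat \<times> nat) \<Rightarrow> bool \<Rightarrow> bool \<Rightarrow> complex" where
  "uu q p s b = (if s then (if b then complex_of_real (sqrt (1 - (cmod (F q p))\<^sup>2)) else F q p)
                 else (if b then 0 else 1))"

lemma uu_sum: "cmod (F q p) \<le> 1 \<Longrightarrow>
  (\<Sum>b\<in>UNIV. uu q p s b * cnj (uu q p s' b)) =
    (if s = s' then 1 else if s then F q p else cnj (F q p))"
proof -
  assume n: "cmod (F q p) \<le> 1"
  have u: "(UNIV :: bool set) = {True, False}" by auto
  have sq: "complex_of_real (sqrt (1 - (cmod (F q p))\<^sup>2)) * cnj (complex_of_real (sqrt (1 - (cmod (F q p))\<^sup>2)))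
      = complex_of_real (1 - (cmod (F q p))\<^sup>2)"
  proof -
    have "(cmod (F q p))\<^sup>2 \<le> 1" using n by (simp add: power_le_one)
    then have "0 \<le> 1 - (cmod (F q p))\<^sup>2" by simp
    then show ?thesis by (simp flip: of_real_mult)
  qed
  have ff: "F q p * cnj (F q p) = complex_of_real ((cmod (F q p))\<^sup>2)"
    by (rule complex_norm_square[symmetric])
  have tt: "complex_of_real (sqrt (1 - (cmod (F q p))\<^sup>2)) * cnj (complex_of_real (sqrt (1 - (cmod (F q p))\<^sup>2)))
     + F q p * cnj (F q p) = 1"
    unfolding ff sq by (simp flip: of_real_add)
  show ?thesis
  proof (cases s; cases s')
    assume "s" "s'" then show ?thesis using tt by (simp add: u uu_def)
  qed (simp_all add: u uu_def)
qed

lemma prod_pairs: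
  assumes m: "mset al = mset be" and oc: "occ al \<subseteq> Oc" and fin: "finite Oc"
    and herm: "\<And>i j. i \<in> set al \<Longrightarrow> j \<in> set al \<Longrightarrow> i \<noteq> j \<Longrightarrow> q i j = cnj (q j i)"
    and Qs: "Qs = {p \<in> Oc \<times> Oc. fst (fst p) < fst (snd p)}"
  shows "(\<Prod>p\<in>Qs. (if st be p = st al p then 1 else if st be p then F q p else cnj (F q p)))
         = (\<Prod>p\<in>invs al be. F q p)"
proof -
  define h where "h p = (if p \<in> invs al be then F q p else 1)" for p
  have ob: "occ be = occ al" using occ_mset[OF m] by simp
  have finQ: "finite Qs" unfolding Qs using fin by (auto intro: finite_subset[of _ "Oc \<times> Oc"])
  have sub: "invs al be \<subseteq> Qs \<union> prod.swap ` Qs"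
  proof
    fix p assume p: "p \<in> invs al be"
    obtain x y where pe: "p = (x,y)" by (cases p) auto
    have "x \<in> Oc" "y \<in> Oc" "fst x \<noteq> fst y" using p pe oc by (auto simp: invs_def)
    note h = this
    show "p \<in> Qs \<union> prod.swap ` Qs"
    proof (cases "fst x < fst y")
      case True then show ?thesis using h pe Qs by auto
    next
      case False
      then have "(y,x) \<in> Qs" using h Qs by auto
      then show ?thesis using pe by (metis UnI2 image_eqI swap_simp)
    qed
  qed
  have "(\<Prod>p\<in>invs al be. F q p) = (\<Prod>p\<in>Qs \<union> prod.swap ` Qs. h p)"
    by (rule prod.mono_neutral_cong_left) (use sub finQ in \<open>auto simp: h_def\<close>)
  also have "\<dots> = (\<Prod>p\<in>Qs. h p) * (\<Prod>p\<in>prod.swap ` Qs. h p)"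
    by (rule prod.union_disjoint) (use finQ in \<open>auto simp: Qs\<close>)
  also have "(\<Prod>p\<in>prod.swap ` Qs. h p) = (\<Prod>p\<in>Qs. h (prod.swap p))"
    by (subst prod.reindex) (auto simp: inj_on_def)
  also have "(\<Prod>p\<in>Qs. h p) * (\<Prod>p\<in>Qs. h (prod.swap p)) = (\<Prod>p\<in>Qs. h p * h (prod.swap p))"
    by (rule prod.distrib[symmetric])
  also have "\<dots> = (\<Prod>p\<in>Qs. (if st be p = st al p then 1 else if st be p then F q p else cnj (F q p)))"
  proof (rule prod.cong[OF refl])
    fix p assume pQ: "p \<in> Qs"
    obtain x y where pe: "p = (x,y)" by (cases p) auto
    have fxy: "fst x < fst y" using pQ pe Qs by auto
    show "h p * h (prod.swap p) = (if st be p = st al p then 1 else if st be p then F q p else cnj (F q p))"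
    proof (cases "x \<in> occ al \<and> y \<in> occ al")
      case False
      then show ?thesis using pe by (auto simp: h_def st_def invs_def ob)
    next
      case True
      have xy: "x \<noteq> y" using fxy by auto
      have pa: "pos al x \<noteq> pos al y" using pos_inj True xy by blast
      have pb: "pos be x \<noteq> pos be y" using pos_inj True xy ob by blast
      have hq: "q (fst y) (fst x) = cnj (q (fst x) (fst y))"
        using herm[of "fst y" "fst x"] occ_fst True fxy by auto
      have s1: "st be p = (pos be y < pos be x)" "st al p = (pos al y < pos al x)"
        using True pe ob by (auto simp: st_def)
      have i1: "p \<in> invs al be \<longleftrightarrow> pos al x < pos al y \<and> pos be y < pos be x"
        using True pe fxy by (auto simp: invs_def)
      have i2: "prod.swap p \<in> invs al be \<longleftrightarrow> pos al y < pos al x \<and> pos be x < pos be y"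
        using True pe fxy by (auto simp: invs_def)
      show ?thesis
        unfolding h_def s1 i1 i2 using pa pb hq pe by (auto simp: linorder_neq_iff)
    qed
  qed
  finally show ?thesis by simp
qed

lemma psd_words:
  fixes ws :: "nat \<Rightarrow> nat list" and c :: "nat \<Rightarrow> complex" and L :: "nat set"
  assumes herm: "\<And>i j. i \<in> L \<Longrightarrow> j \<in> L \<Longrightarrow> i \<noteq> j \<Longrightarrow> q i j = cnj (q j i)"
    and nrm: "\<And>i j. i \<in> L \<Longrightarrow> j \<in> L \<Longrightarrow> i \<noteq> j \<Longrightarrow> cmod (q i j) \<le> 1"
    and lett: "\<And>k. k < n \<Longrightarrow> set (ws k) \<subseteq> L"
  shows "0 \<le> (\<Sum>k<n. \<Sum>l<n. c k * cnj (c l) * qfin q (ws l) (ws k))"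
proof -
  define Oc where "Oc = (\<Union>k<n. occ (ws k))"
  define Qs where "Qs = {p \<in> Oc \<times> Oc. fst (fst p) < fst (snd p)}"
  define Ms where "Ms = (\<lambda>k. mset (ws k)) ` {..<n}"
  define Z where "Z = Ms \<times> PiE Qs (\<lambda>_. UNIV :: bool set)"
  define v where "v w z = (if mset w = fst z then 1 else 0) * (\<Prod>p\<in>Qs. uu q p (st w p) (snd z p))" for w z
  have finOc: "finite Oc" unfolding Oc_def by simp
  have finQs: "finite Qs" unfolding Qs_def using finOc by (auto intro: finite_subset[of _ "Oc \<times> Oc"])
  have finZ: "finite Z" unfolding Z_def Ms_def using finQs by (simp add: finite_PiE)
  have key: "qfin q (ws l) (ws k) = (\<Sum>z\<in>Z. v (ws k) z * cnj (v (ws l) z))" if kl: "k < n" "l < n" for k l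
  proof -
    define T where "T = PiE Qs (\<lambda>_. UNIV :: bool set)"
    define G where "G p = (if st (ws k) p = st (ws l) p then 1 else if st (ws k) p then F q p else cnj (F q p))" for p
    have letOc: "fst x \<in> L" if "x \<in> Oc" for x
      using that lett occ_fst unfolding Oc_def by blast
    have nF: "cmod (F q p) \<le> 1" if "p \<in> Qs" for p
      using that nrm letOc unfolding Qs_def by auto
    have e1: "(\<Sum>z\<in>Z. v (ws k) z * cnj (v (ws l) z)) = (\<Sum>M\<in>Ms. \<Sum>t\<in>T. v (ws k) (M,t) * cnj (v (ws l) (M,t)))"
      unfolding Z_def T_def by (simp add: sum.cartesian_product)
    have e2: "v (ws k) (M,t) * cnj (v (ws l) (M,t)) = (if M = mset (ws k) \<and> mset (ws l) = mset (ws k) then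
       (\<Prod>p\<in>Qs. uu q p (st (ws k) p) (t p) * cnj (uu q p (st (ws l) p) (t p))) else 0)" for M t
      by (auto simp: v_def prod.distrib)
    have e3: "(\<Sum>t\<in>T. \<Prod>p\<in>Qs. uu q p (st (ws k) p) (t p) * cnj (uu q p (st (ws l) p) (t p)))
        = (\<Prod>p\<in>Qs. \<Sum>b\<in>UNIV. uu q p (st (ws k) p) b * cnj (uu q p (st (ws l) p) b))"
      unfolding T_def by (rule prod_sum_PiE[symmetric]) (simp_all add: finQs)
    have e4: "(\<Prod>p\<in>Qs. \<Sum>b\<in>UNIV. uu q p (st (ws k) p) b * cnj (uu q p (st (ws l) p) b)) = (\<Prod>p\<in>Qs. G p)"
      by (rule prod.cong[OF refl]) (simp add: uu_sum nF G_def)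
    have mb: "mset (ws k) \<in> Ms" using kl Ms_def by auto
    have "(\<Sum>z\<in>Z. v (ws k) z * cnj (v (ws l) z))
        = (\<Sum>M\<in>Ms. if M = mset (ws k) then (if mset (ws l) = mset (ws k) then (\<Prod>p\<in>Qs. G p) else 0) else 0)"
      unfolding e1 by (rule sum.cong[OF refl]) (auto simp: e2 e3 e4)
    also have "\<dots> = (if mset (ws l) = mset (ws k) then (\<Prod>p\<in>Qs. G p) else 0)"
      using mb by (simp add: sum.delta Ms_def)
    also have "\<dots> = qfin q (ws l) (ws k)"
    proof (cases "mset (ws l) = mset (ws k)")
      case True
      have oc: "occ (ws l) \<subseteq> Oc" using kl Oc_def by auto
      have "(\<Prod>p\<in>Qs. G p) = (\<Prod>p\<in>invs (ws l) (ws k). F q p)"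
        unfolding G_def
        by (rule prod_pairs[OF True oc finOc _ Qs_def]) (use herm lett kl in blast)
      then show ?thesis using True by (simp add: qfin_formula)
    next
      case False then show ?thesis by (simp add: qfin_formula)
    qed
    finally show ?thesis by simp
  qed
  have "(\<Sum>k<n. \<Sum>l<n. c k * cnj (c l) * qfin q (ws l) (ws k))
      = (\<Sum>k<n. \<Sum>l<n. \<Sum>z\<in>Z. c k * v (ws k) z * cnj (c l * v (ws l) z))"
    by (simp add: key sum_distrib_left mult_ac)
  also have "\<dots> = (\<Sum>k<n. \<Sum>z\<in>Z. \<Sum>l<n. c k * v (ws k) z * cnj (c l * v (ws l) z))"
    by (rule sum.cong[OF refl], rule sum.swap)
  also have "\<dots> = (\<Sum>z\<in>Z. \<Sum>k<n. \<Sum>l<n. c k * v (ws k) z * cnj (c l * v (ws l) z))"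
    by (rule sum.swap)
  also have "\<dots> = (\<Sum>z\<in>Z. (\<Sum>k<n. c k * v (ws k) z) * cnj (\<Sum>l<n. c l * v (ws l) z))"
    by (simp only: cnj_sum sum_product)
  also have "0 \<le> \<dots>"
    by (rule sum_nonneg) (rule mult_cnj_nonneg)
  finally show ?thesis .
qed



lemma prefix_add: "prefix b (m + j) = prefix b m @ map b [m..<m+j]"
  unfolding prefix_def by (simp only: upt_add_eq_append[of 0 m j, OF le0] map_append)

lemma prefix_le: "m \<le> m' \<Longrightarrow> prefix b m' = prefix b m @ map b [m..<m']"
proof -
  assume "m \<le> m'"
  then obtain j where "m' = m + j" using le_Suc_ex by blast
  then show ?thesis using prefix_add[of b m j] by simp
qed

lemma prefix_Suc: "prefix b (Suc n) = prefix b n @ [b n]"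
  unfolding prefix_def by simp

lemma length_prefix[simp]: "length (prefix b m) = m"
  unfolding prefix_def by simp

lemma set_prefix: "b \<in> infidx d \<Longrightarrow> set (prefix b m) \<subseteq> {1..d}"
  unfolding prefix_def infidx_def by auto

lemma invs_mono:
  assumes "m \<le> m'" "mset (prefix g m) = mset (prefix b m)"
  shows "invs (prefix g m) (prefix b m) \<subseteq> invs (prefix g m') (prefix b m')"
proof
  fix p assume p: "p \<in> invs (prefix g m) (prefix b m)"
  obtain x y where pe: "p = (x,y)" by (cases p) auto
  have gm: "prefix g m' = prefix g m @ map g [m..<m']" and bm: "prefix b m' = prefix b m @ map b [m..<m']"
    using prefix_le[OF assms(1)] by auto
  have o: "occ (prefix b m) = occ (prefix g m)" using occ_mset assms(2) by metis
  have xy: "x \<in> occ (prefix g m)" "y \<in> occ (prefix g m)" using p pe by (auto simp: invs_def)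
  have xy': "x \<in> occ (prefix b m)" "y \<in> occ (prefix b m)" using xy o by auto
  have f: "fst x \<noteq> fst y" "pos (prefix g m) x < pos (prefix g m) y" "pos (prefix b m) y < pos (prefix b m) x"
    using p pe by (auto simp: invs_def)
  have o1: "x \<in> occ (prefix g m')" "y \<in> occ (prefix g m')"
    using xy occ_append_mono unfolding gm by blast+
  have e1: "pos (prefix g m') x = pos (prefix g m) x" "pos (prefix g m') y = pos (prefix g m) y"
    unfolding gm using xy by (simp_all add: pos_append)
  have e2: "pos (prefix b m') x = pos (prefix b m) x" "pos (prefix b m') y = pos (prefix b m) y"
    unfolding bm using xy' by (simp_all add: pos_append)
  show "p \<in> invs (prefix g m') (prefix b m')"
    unfolding pe invs_def using o1 e1 e2 f by simp
qed

lemma invs_cross: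
  assumes "m \<le> m'" "mset (prefix g m) \<noteq> mset (prefix b m)" "mset (prefix g m') = mset (prefix b m')"
  shows "\<exists>p\<in>invs (prefix g m') (prefix b m'). m \<le> pos (prefix g m') (snd p)"
proof -
  define u where "u = prefix g m"
  define v where "v = prefix b m"
  have gm: "prefix g m' = u @ map g [m..<m']" unfolding u_def by (rule prefix_le[OF assms(1)])
  have bm: "prefix b m' = v @ map b [m..<m']" unfolding v_def by (rule prefix_le[OF assms(1)])
  have ne: "occ u \<noteq> occ v" using assms(2) occ_eq_mset u_def v_def by metis
  have cu: "card (occ u) = m" "card (occ v) = m" unfolding u_def v_def card_occ by simp_all
  have "\<not> occ v \<subseteq> occ u"
  proof
    assume "occ v \<subseteq> occ u"
    then have "occ v = occ u" using card_subset_eq[of "occ u" "occ v"] cu by simp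
    then show False using ne by simp
  qed
  then obtain y where y: "y \<in> occ v" "y \<notin> occ u" by blast
  have "\<not> occ u \<subseteq> occ v"
  proof
    assume "occ u \<subseteq> occ v"
    then have "occ u = occ v" using card_subset_eq[of "occ v" "occ u"] cu by simp
    then show False using ne by simp
  qed
  then obtain x where x: "x \<in> occ u" "x \<notin> occ v" by blast
  have fxy: "fst x \<noteq> fst y"
  proof
    assume e: "fst x = fst y"
    obtain a k where xe: "x = (a,k)" by (cases x) auto
    obtain a' l where ye: "y = (a',l)" by (cases y) auto
    have aa: "a' = a" using e xe ye by simp
    have "k < count (mset u) a" "\<not> k < count (mset v) a" using x xe by (simp_all add: occ_def)
    moreover have "l < count (mset v) a" "\<not> l < count (mset u) a" using y ye aa by (simp_all add: occ_def)
    ultimately show False by linarith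
  qed
  have o': "occ (prefix b m') = occ (prefix g m')" using occ_mset assms(3) by metis
  have lu: "length u = m" "length v = m" unfolding u_def v_def by simp_all
  have xo: "x \<in> occ (prefix g m')" unfolding gm using x(1) occ_append_mono by blast
  have "y \<in> occ (prefix b m')" unfolding bm using y(1) occ_append_mono by blast
  then have yo: "y \<in> occ (prefix g m')" using o' by simp
  have p1: "pos (prefix g m') x < m" unfolding gm using pos_append[OF x(1)] pos_lt[OF x(1)] lu by simp
  have p2: "m \<le> pos (prefix g m') y" unfolding gm using pos_append_ge[OF y(2)] lu by simp
  have p3: "pos (prefix b m') y < m" unfolding bm using pos_append[OF y(1)] pos_lt[OF y(1)] lu by simp
  have p4: "m \<le> pos (prefix b m') x" unfolding bm using pos_append_ge[OF x(2)] lu by simp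
  have "(x,y) \<in> invs (prefix g m') (prefix b m')"
    using xo yo fxy p1 p2 p3 p4 unfolding invs_def by auto
  then show ?thesis using p2 by (intro bexI[of _ "(x,y)"]) simp_all
qed

lemma finite_invs[simp]: "finite (invs u v)"
  by (rule finite_subset[of _ "occ u \<times> occ u"]) (auto simp: invs_def)

lemma qfin_bound:
  assumes r: "0 \<le> r" and qr: "\<And>i j. i \<in> L \<Longrightarrow> j \<in> L \<Longrightarrow> i \<noteq> j \<Longrightarrow> cmod (q i j) \<le> r"
    and L: "set u \<subseteq> L"
  shows "cmod (qfin q u v) \<le> r ^ card (invs u v)"
proof (cases "mset u = mset v")
  case True
  have "cmod (qfin q u v) = (\<Prod>p\<in>invs u v. cmod (F q p))"
    using True by (simp add: qfin_formula prod_norm)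
  also have "\<dots> \<le> (\<Prod>p\<in>invs u v. r)"
  proof (rule prod_mono)
    fix p assume p: "p \<in> invs u v"
    then have "fst (fst p) \<in> L" "fst (snd p) \<in> L" "fst (fst p) \<noteq> fst (snd p)"
      using occ_fst L by (auto simp: invs_def)
    then show "0 \<le> cmod (F q p) \<and> cmod (F q p) \<le> r" using qr by auto
  qed
  finally show ?thesis by simp
next
  case False then show ?thesis using r by (simp add: qfin_formula)
qed

lemma tail_equal:
  fixes g b :: "nat \<Rightarrow> nat"
  assumes r: "0 \<le> r" "r < 1" and qr: "\<And>i j. i \<in> L \<Longrightarrow> j \<in> L \<Longrightarrow> i \<noteq> j \<Longrightarrow> cmod (q i j) \<le> r"
    and L: "\<And>n. g n \<in> L"
    and nt: "\<not> ((\<lambda>m. qfin q (prefix g m) (prefix b m)) \<longlonglongrightarrow> 0)"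
  shows "\<exists>m0. \<forall>n\<ge>m0. g n = b n"
proof -
  define A where "A m \<longleftrightarrow> mset (prefix g m) = mset (prefix b m)" for m
  define S where "S m = invs (prefix g m) (prefix b m)" for m
  define f where "f m = qfin q (prefix g m) (prefix b m)" for m
  obtain e where e: "e > 0" and fr: "\<And>N. \<exists>m\<ge>N. e \<le> cmod (f m)"
    using nt unfolding LIMSEQ_iff f_def by (auto simp: not_less)
  obtain K where K: "r ^ K < e" using real_arch_pow_inv[OF e r(2)] by auto
  have Lp: "set (prefix g m) \<subseteq> L" for m using L unfolding prefix_def by auto
  have good: "A m \<and> card (S m) < K" if "e \<le> cmod (f m)" for m
  proof
    show "A m" using that e unfolding A_def f_def by (auto simp: qfin_formula split: if_splits)
    show "card (S m) < K"
    proof (rule ccontr)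
      assume "\<not> card (S m) < K"
      then have "K \<le> card (S m)" by (simp only: not_less)
      then have "r ^ card (S m) \<le> r ^ K" by (rule power_decreasing) (use r in auto)
      moreover have "cmod (f m) \<le> r ^ card (S m)"
        unfolding f_def S_def by (rule qfin_bound[OF r(1) qr Lp])
      ultimately show False using that K by linarith
    qed
  qed
  have bnd: "card (S m) < K" if "A m" for m
  proof -
    obtain m' where m': "m' \<ge> m" "e \<le> cmod (f m')" using fr by blast
    have "S m \<subseteq> S m'" unfolding S_def by (rule invs_mono[OF m'(1) that[unfolded A_def]])
    then have "card (S m) \<le> card (S m')" unfolding S_def by (intro card_mono) auto
    then show ?thesis using good[OF m'(2)] by simp
  qed
  obtain m1 where m1: "e \<le> cmod (f m1)" using fr by blast
  have A1: "A m1" using good[OF m1] by simp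
  define C where "C = (\<lambda>m. card (S m)) ` {m. A m}"
  have "C \<subseteq> {..<K}" unfolding C_def using bnd by auto
  then have finC: "finite C" by (rule finite_subset) simp
  have neC: "C \<noteq> {}" unfolding C_def using A1 by auto
  have "Max C \<in> C" by (rule Max_in[OF finC neC])
  then obtain m0 where m0': "m0 \<in> {m. A m}" "Max C = card (S m0)" unfolding C_def by (rule imageE)
  then have m0: "A m0" "card (S m0) = Max C" by simp_all
  have maxS: "S m' = S m0" if "A m'" "m0 \<le> m'" for m'
  proof -
    have sub: "S m0 \<subseteq> S m'" unfolding S_def by (rule invs_mono[OF that(2) m0(1)[unfolded A_def]])
    have le1: "card (S m') \<le> card (S m0)" using m0(2) Max_ge[OF finC] that C_def by auto
    have fin: "finite (S m')" unfolding S_def by simp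
    have le2: "card (S m0) \<le> card (S m')" by (rule card_mono[OF fin sub])
    have "S m0 = S m'" by (rule card_subset_eq[OF fin sub]) (use le1 le2 in simp)
    then show ?thesis by simp
  qed
  have allA: "A m" if "m0 \<le> m" for m
  proof (rule ccontr)
    assume nA: "\<not> A m"
    obtain m' where m': "m' \<ge> Suc m" "e \<le> cmod (f m')" using fr by blast
    have Am': "A m'" using good[OF m'(2)] by simp
    obtain p where p: "p \<in> S m'" and pm: "m \<le> pos (prefix g m') (snd p)"
      using invs_cross[of m m' g b] m'(1) nA Am' unfolding A_def S_def by auto
    have "p \<in> S m0" using p maxS[OF Am'] m'(1) that by simp
    then have so: "snd p \<in> occ (prefix g m0)" unfolding S_def invs_def by auto
    have "pos (prefix g m') (snd p) = pos (prefix g m0) (snd p)"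
      using prefix_le[of m0 m' g] m'(1) that pos_append[OF so] by simp
    also have "\<dots> < m0" using pos_lt[OF so] by simp
    finally show False using pm that by simp
  qed
  have "g n = b n" if "m0 \<le> n" for n
  proof -
    have "A n" "A (Suc n)" using allA that by auto
    then have "mset (prefix g n) + {#g n#} = mset (prefix b n) + {#b n#}"
      unfolding A_def prefix_Suc by simp
    moreover have "mset (prefix g n) = mset (prefix b n)" using \<open>A n\<close> A_def by simp
    ultimately show ?thesis by simp
  qed
  then show ?thesis by blast
qed

lemma tail_const:
  assumes "\<forall>n\<ge>m. g n = b n" "m \<le> M"
  shows "qfin q (prefix g M) (prefix b M) = qfin q (prefix g m) (prefix b m)"
proof -
  have e: "map g [m..<M] = map b [m..<M]" using assms(1) by simp
  have "qfin q (prefix g M) (prefix b M) = qfin q (prefix g m @ map b [m..<M]) (prefix b m @ map b [m..<M])"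
    unfolding prefix_le[OF assms(2), of g] prefix_le[OF assms(2), of b] e ..
  also have "\<dots> = qfin q (prefix g m) (prefix b m)" by (rule qfin_append)
  finally show ?thesis .
qed



lemma nonneg_limit:
  fixes X :: "nat \<Rightarrow> complex"
  assumes "X \<longlonglongrightarrow> L" "\<And>m. 0 \<le> X m"
  shows "0 \<le> L"
proof -
  have re: "(\<lambda>m. Re (X m)) \<longlonglongrightarrow> Re L" using tendsto_Re[OF assms(1)] .
  have im: "(\<lambda>m. Im (X m)) \<longlonglongrightarrow> Im L" using tendsto_Im[OF assms(1)] .
  have h1: "\<And>m. 0 \<le> Re (X m)" and h2: "\<And>m. Im (X m) = 0"
    using assms(2) unfolding less_eq_complex_def by auto
  have "0 \<le> Re L" by (rule LIMSEQ_le_const[OF re]) (use h1 in blast)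
  moreover have "(\<lambda>m. Im (X m)) \<longlonglongrightarrow> 0" unfolding h2 by simp
  then have "Im L = 0" using LIMSEQ_unique[OF im] by blast
  ultimately have "0 \<le> Re L" "Im L = 0" by simp_all
  then show ?thesis by (simp add: less_eq_complex_def)
qed

theorem mainTheorem1:
  fixes d :: nat and q :: "nat \<Rightarrow> nat \<Rightarrow> complex" and \<alpha> :: "nat \<Rightarrow> nat"
  assumes "d \<ge> 2"
    and "\<And>i j. i \<in> {1..d} \<Longrightarrow> j \<in> {1..d} \<Longrightarrow> i \<noteq> j \<Longrightarrow> norm (q i j) < 1"
    and "\<And>i j. i \<in> {1..d} \<Longrightarrow> j \<in> {1..d} \<Longrightarrow> i \<noteq> j \<Longrightarrow> q i j = cnj (q j i)"
    and "\<alpha> \<in> infidx d"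
  shows "(\<forall>\<beta>\<in>infidx d. \<forall>\<gamma>\<in>infidx d.
            convergent (\<lambda>m. qfin q (prefix \<gamma> m) (prefix \<beta> m)))
       \<and> (\<forall>\<beta>\<in>infidx d. \<forall>\<gamma>\<in>infidx d. midx_equiv \<beta> \<alpha> \<longrightarrow> midx_equiv \<gamma> \<alpha> \<longrightarrow>
            eform q \<beta> \<gamma> = cnj (eform q \<gamma> \<beta>))
       \<and> (\<forall>(n::nat) (c::nat \<Rightarrow> complex) (B::nat \<Rightarrow> nat \<Rightarrow> nat).
            (\<forall>k<n. B k \<in> infidx d \<and> midx_equiv (B k) \<alpha>) \<longrightarrow>
            0 \<le> (\<Sum>k<n. \<Sum>l<n. c k * cnj (c l) * eform q (B k) (B l)))
       \<and> (\<forall>\<beta>\<in>infidx d. \<forall>\<gamma>\<in>infidx d. midx_equiv \<beta> \<alpha> \<longrightarrow> midx_equiv \<gamma> \<alpha> \<longrightarrow>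
            ((\<forall>m. shift m \<beta> \<noteq> shift m \<gamma>) \<longrightarrow> eform q \<beta> \<gamma> = 0)
          \<and> (\<forall>m. shift m \<beta> = shift m \<gamma> \<longrightarrow>
               eform q \<beta> \<gamma> = qfin q (prefix \<gamma> m) (prefix \<beta> m)))"
proof -
  note nq = assms(2) and hq = assms(3)
  define D where "D = {p \<in> {1..d} \<times> {1..d}. fst p \<noteq> snd p}"
  define r where "r = Max (insert 0 ((\<lambda>p. cmod (q (fst p) (snd p))) ` D))"
  have finD: "finite D" unfolding D_def by (rule finite_subset[of _ "{1..d} \<times> {1..d}"]) auto
  have finR: "finite (insert 0 ((\<lambda>p. cmod (q (fst p) (snd p))) ` D))" using finD by simp
  have r0: "0 \<le> r" unfolding r_def by (rule Max_ge[OF finR]) simp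
  have r1: "r < 1" unfolding r_def
  proof (subst Max_less_iff[OF finR])
    show "insert 0 ((\<lambda>p. cmod (q (fst p) (snd p))) ` D) \<noteq> {}" by simp
    show "\<forall>a\<in>insert 0 ((\<lambda>p. cmod (q (fst p) (snd p))) ` D). a < 1"
      unfolding D_def using nq by auto
  qed
  have qr: "cmod (q i j) \<le> r" if "i \<in> {1..d}" "j \<in> {1..d}" "i \<noteq> j" for i j
  proof -
    have "(i,j) \<in> D" using that D_def by simp
    then have "cmod (q i j) \<in> insert 0 ((\<lambda>p. cmod (q (fst p) (snd p))) ` D)"
      by (intro insertI2 image_eqI[of _ _ "(i,j)"]) simp_all
    then show ?thesis unfolding r_def by (rule Max_ge[OF finR])
  qed
  have letters: "\<And>n. b n \<in> {1..d}" if "b \<in> infidx d" for b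
    using that unfolding infidx_def by auto
  have dich: "((\<lambda>m. qfin q (prefix g m) (prefix b m)) \<longlonglongrightarrow> 0) \<or> (\<exists>m0. \<forall>n\<ge>m0. g n = b n)"
    if "g \<in> infidx d" for g b
    using tail_equal[where g=g and b=b and q=q and L="{1..d}" and r=r, OF r0 r1 qr letters[OF that]] by blast
  have lim_tail: "(\<lambda>M. qfin q (prefix g M) (prefix b M)) \<longlonglongrightarrow> qfin q (prefix g m) (prefix b m)"
    if "\<forall>n\<ge>m. g n = b n" for g b m
  proof (rule tendsto_eventually)
    show "\<forall>\<^sub>F M in sequentially. qfin q (prefix g M) (prefix b M) = qfin q (prefix g m) (prefix b m)"
      unfolding eventually_sequentially using tail_const[OF that] by blast
  qed
  have conv: "convergent (\<lambda>m. qfin q (prefix g m) (prefix b m))" if "g \<in> infidx d" for g b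
  proof (cases "(\<lambda>m. qfin q (prefix g m) (prefix b m)) \<longlonglongrightarrow> 0")
    case True then show ?thesis by (rule convergentI)
  next
    case False
    then obtain m0 where "\<forall>n\<ge>m0. g n = b n" using dich[OF \<open>g \<in> infidx d\<close>, of b] by blast
    then show ?thesis by (rule convergentI[OF lim_tail])
  qed
  have shiftD: "\<forall>n\<ge>m. g n = b n" if "shift m b = shift m g" for g b m
  proof (intro allI impI)
    fix n assume "m \<le> n"
    have "shift m b (n - m) = shift m g (n - m)" using that by simp
    then show "g n = b n" using \<open>m \<le> n\<close> by (simp add: shift_def)
  qed
  have P1: "\<forall>\<beta>\<in>infidx d. \<forall>\<gamma>\<in>infidx d. convergent (\<lambda>m. qfin q (prefix \<gamma> m) (prefix \<beta> m))"
    using conv by blast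
  have P2: "eform q b g = cnj (eform q g b)" if bi: "b \<in> infidx d" and gi: "g \<in> infidx d" for b g
  proof -
    obtain L where L: "(\<lambda>m. qfin q (prefix b m) (prefix g m)) \<longlonglongrightarrow> L"
      using conv[OF bi, of g] by (auto simp: convergent_def)
    have e: "qfin q (prefix g m) (prefix b m) = cnj (qfin q (prefix b m) (prefix g m))" for m
      by (rule qfin_herm) (use hq set_prefix[OF gi] in blast)
    have "(\<lambda>m. qfin q (prefix g m) (prefix b m)) \<longlonglongrightarrow> cnj L"
      unfolding e by (rule tendsto_cnj[OF L])
    then have "eform q b g = cnj L" unfolding eform_def qinf_def by (rule limI)
    moreover have "eform q g b = L" unfolding eform_def qinf_def using L by (rule limI)
    ultimately show ?thesis by simp
  qed
  have P3: "0 \<le> (\<Sum>k<n. \<Sum>l<n. c k * cnj (c l) * eform q (B k) (B l))"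
    if B: "\<forall>k<n. B k \<in> infidx d \<and> midx_equiv (B k) \<alpha>" for n :: nat and c :: "nat \<Rightarrow> complex" and B :: "nat \<Rightarrow> nat \<Rightarrow> nat"
  proof (rule nonneg_limit)
    have lk: "(\<lambda>m. qfin q (prefix (B l) m) (prefix (B k) m)) \<longlonglongrightarrow> eform q (B k) (B l)"
      if "l < n" for k l
      unfolding eform_def qinf_def using conv[of "B l" "B k"] B that by (simp add: convergent_LIMSEQ_iff)
    show "(\<lambda>m. \<Sum>k<n. \<Sum>l<n. c k * cnj (c l) * qfin q (prefix (B l) m) (prefix (B k) m))
          \<longlonglongrightarrow> (\<Sum>k<n. \<Sum>l<n. c k * cnj (c l) * eform q (B k) (B l))"
      by (intro tendsto_sum tendsto_mult_left lk) simp
    show "0 \<le> (\<Sum>k<n. \<Sum>l<n. c k * cnj (c l) * qfin q (prefix (B l) m) (prefix (B k) m))" for m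
    proof -
      have "0 \<le> (\<Sum>k<n. \<Sum>l<n. c k * cnj (c l) * qfin q ((\<lambda>k. prefix (B k) m) l) ((\<lambda>k. prefix (B k) m) k))"
        by (rule psd_words[where L="{1..d}"]) (use hq in blast, use nq less_imp_le in blast, use set_prefix B in blast)
      then show ?thesis by simp
    qed
  qed
  have P4: "((\<forall>m. shift m b \<noteq> shift m g) \<longrightarrow> eform q b g = 0)
          \<and> (\<forall>m. shift m b = shift m g \<longrightarrow> eform q b g = qfin q (prefix g m) (prefix b m))"
    if "b \<in> infidx d" "g \<in> infidx d" for b g
  proof (intro conjI allI impI)
    assume ns: "\<forall>m. shift m b \<noteq> shift m g"
    have "\<not> (\<exists>m0. \<forall>n\<ge>m0. g n = b n)"
    proof
      assume "\<exists>m0. \<forall>n\<ge>m0. g n = b n"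
      then obtain m0 where m0: "\<forall>n\<ge>m0. g n = b n" by blast
      have "shift m0 b = shift m0 g" using m0 by (auto simp: shift_def)
      then show False using ns by blast
    qed
    then have "(\<lambda>m. qfin q (prefix g m) (prefix b m)) \<longlonglongrightarrow> 0" using dich[OF that(2), of b] by blast
    then show "eform q b g = 0" unfolding eform_def qinf_def by (rule limI)
  next
    fix m assume "shift m b = shift m g"
    then have "\<forall>n\<ge>m. g n = b n" by (rule shiftD)
    then show "eform q b g = qfin q (prefix g m) (prefix b m)"
      unfolding eform_def qinf_def using lim_tail by (intro limI) blast
  qed
  show ?thesis
    apply (intro conjI)
       apply (rule P1)
      apply (intro ballI impI, rule P2; assumption)
     apply (intro allI impI, rule P3; assumption)
    apply (intro ballI impI, rule P4; assumption)
    done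
qed

end
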